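(* Let $n \ge 1$ and let $m$ be an even positive integer such that $\Delta_{n,m} \neq \emptyset$, i.e. there exists a positive semidefinite form in $n$ real variables of degree $m$ that is not a sum of squares of forms. Then there does not exist a non-zero form $h \in H_d(\mathbb{R}^n)$ (for any $d$) such that $hp$ is a sum of squares for every $p \in P_{n,m}$.
   Context: $H_d(\mathbb{R}^n)$ denotes the real vector space of real homogeneous forms of degree $d$ in $n$ variables $x_1,\dots,x_n$. For even $m$, $P_{n,m}$ is the set of forms $p \in H_m(\mathbb{R}^n)$ that are positive semidefinite (psd), i.e. $p(x) \ge 0$ for all $x \in \mathbb{R}^n$. A form is a sum of squares (sos) if it can be written as $\sum_k h_k^2$ with each $h_k$ a real polynomial. $\Sigma_{n,m} \subseteq P_{n,m}$ is the set of sos forms in $H_m(\mathbb{R}^n)$, and $\Delta_{n,m} = P_{n,m} \setminus \Sigma_{n,m}$. *)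

theory Defs
  imports Complex_Main
begin

(* Points of R^n are represented as functions nat => real; only coordinates 0..n-1 matter.
   Exponent vectors are functions nat => nat vanishing outside {0..<n}. *)

definition exps :: "nat \<Rightarrow> (nat \<Rightarrow> nat) set" where
  "exps n = {\<alpha>. \<forall>i. n \<le> i \<longrightarrow> \<alpha> i = 0}"

definition mons_eq :: "nat \<Rightarrow> nat \<Rightarrow> (nat \<Rightarrow> nat) set" where
  "mons_eq n d = {\<alpha> \<in> exps n. (\<Sum>i<n. \<alpha> i) = d}"

definition mons_le :: "nat \<Rightarrow> nat \<Rightarrow> (nat \<Rightarrow> nat) set" where
  "mons_le n D = {\<alpha> \<in> exps n. (\<Sum>i<n. \<alpha> i) \<le> D}"

definition monom_eval :: "nat \<Rightarrow> (nat \<Rightarrow> nat) \<Rightarrow> (nat \<Rightarrow> real) \<Rightarrow> real" where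
  "monom_eval n \<alpha> x = (\<Prod>i<n. x i ^ \<alpha> i)"

definition is_poly :: "nat \<Rightarrow> ((nat \<Rightarrow> real) \<Rightarrow> real) \<Rightarrow> bool" where
  "is_poly n f \<longleftrightarrow> (\<exists>D c. \<forall>x. f x = (\<Sum>\<alpha>\<in>mons_le n D. c \<alpha> * monom_eval n \<alpha> x))"

definition is_form :: "nat \<Rightarrow> nat \<Rightarrow> ((nat \<Rightarrow> real) \<Rightarrow> real) \<Rightarrow> bool" where
  "is_form n d f \<longleftrightarrow> (\<exists>c. \<forall>x. f x = (\<Sum>\<alpha>\<in>mons_eq n d. c \<alpha> * monom_eval n \<alpha> x))"

definition psd :: "((nat \<Rightarrow> real) \<Rightarrow> real) \<Rightarrow> bool" where
  "psd p \<longleftrightarrow> (\<forall>x. 0 \<le> p x)"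

definition is_sos :: "nat \<Rightarrow> ((nat \<Rightarrow> real) \<Rightarrow> real) \<Rightarrow> bool" where
  "is_sos n p \<longleftrightarrow> (\<exists>hs. (\<forall>h\<in>set hs. is_poly n h) \<and> (\<forall>x. p x = (\<Sum>h\<leftarrow>hs. (h x)\<^sup>2)))"

definition P_set :: "nat \<Rightarrow> nat \<Rightarrow> ((nat \<Rightarrow> real) \<Rightarrow> real) set" where
  "P_set n m = {p. is_form n m p \<and> psd p}"

definition Sigma_set :: "nat \<Rightarrow> nat \<Rightarrow> ((nat \<Rightarrow> real) \<Rightarrow> real) set" where
  "Sigma_set n m = {p. is_form n m p \<and> is_sos n p}"

definition Delta_set :: "nat \<Rightarrow> nat \<Rightarrow> ((nat \<Rightarrow> real) \<Rightarrow> real) set" where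
  "Delta_set n m = P_set n m - Sigma_set n m"

end

theory Submission
  imports Defs "HOL-Analysis.Analysis"
begin

lemma finite_mons_le: "finite (mons_le n D)"
proof -
  have "mons_le n D \<subseteq> {f. \<forall>x. (x \<in> {..<n} \<longrightarrow> f x \<in> {..D}) \<and> (x \<notin> {..<n} \<longrightarrow> f x = 0)}"
  proof
    fix \<alpha> assume a: "\<alpha> \<in> mons_le n D"
    { fix x assume "x < n"
      then have "\<alpha> x \<le> (\<Sum>i<n. \<alpha> i)" by (intro member_le_sum) auto
      with a have "\<alpha> x \<le> D" by (auto simp: mons_le_def) }
    with a show "\<alpha> \<in> {f. \<forall>x. (x \<in> {..<n} \<longrightarrow> f x \<in> {..D}) \<and> (x \<notin> {..<n} \<longrightarrow> f x = 0)}"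
      by (auto simp: mons_le_def exps_def)
  qed
  moreover have "finite {f. \<forall>x. (x \<in> {..<n} \<longrightarrow> f x \<in> {..D}) \<and> (x \<notin> {..<n} \<longrightarrow> f x = (0::nat))}"
    by (rule finite_set_of_finite_funs) auto
  ultimately show ?thesis by (rule finite_subset)
qed

lemma mons_eq_sub: "mons_eq n d \<subseteq> mons_le n d"
  by (auto simp: mons_eq_def mons_le_def)

lemma finite_mons_eq: "finite (mons_eq n d)"
  using finite_subset[OF mons_eq_sub finite_mons_le] .

lemma monom_eval_scale: "monom_eval n \<alpha> (\<lambda>i. t * x i) = t ^ (\<Sum>i<n. \<alpha> i) * monom_eval n \<alpha> x"
  by (simp add: monom_eval_def power_mult_distrib prod.distrib power_sum)

lemma monom_eval_add: "monom_eval n (\<lambda>i. \<alpha> i + \<beta> i) x = monom_eval n \<alpha> x * monom_eval n \<beta> x"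
  by (simp add: monom_eval_def power_add prod.distrib)

lemma monom_eval_cong: "(\<And>i. i < n \<Longrightarrow> x i = y i) \<Longrightarrow> monom_eval n \<alpha> x = monom_eval n \<alpha> y"
  by (simp add: monom_eval_def)

lemma form_cong:
  assumes "is_form n d f" "\<And>i. i < n \<Longrightarrow> x i = y i" shows "f x = f y"
proof -
  obtain c where c: "\<And>x. f x = (\<Sum>\<alpha>\<in>mons_eq n d. c \<alpha> * monom_eval n \<alpha> x)"
    using assms(1) unfolding is_form_def by blast
  show ?thesis unfolding c using monom_eval_cong[OF assms(2)] by simp
qed

lemma form_homog:
  assumes "is_form n d f" shows "f (\<lambda>i. t * x i) = t ^ d * f x"
proof -
  obtain c where c: "\<And>x. f x = (\<Sum>\<alpha>\<in>mons_eq n d. c \<alpha> * monom_eval n \<alpha> x)"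
    using assms unfolding is_form_def by blast
  have "f (\<lambda>i. t * x i) = (\<Sum>\<alpha>\<in>mons_eq n d. c \<alpha> * (t ^ d * monom_eval n \<alpha> x))"
    unfolding c by (intro sum.cong refl) (simp add: monom_eval_scale mons_eq_def)
  also have "\<dots> = t ^ d * f x" unfolding c by (simp add: sum_distrib_left algebra_simps)
  finally show ?thesis .
qed

lemma form_zero: "is_form n d (\<lambda>x. 0)"
  unfolding is_form_def by (rule exI[of _ "\<lambda>_. 0"]) simp

lemma form_add: "is_form n d f \<Longrightarrow> is_form n d g \<Longrightarrow> is_form n d (\<lambda>x. f x + g x)"
proof -
  assume "is_form n d f" "is_form n d g"
  then obtain c e where c: "\<And>x. f x = (\<Sum>\<alpha>\<in>mons_eq n d. c \<alpha> * monom_eval n \<alpha> x)"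
    and e: "\<And>x. g x = (\<Sum>\<alpha>\<in>mons_eq n d. e \<alpha> * monom_eval n \<alpha> x)"
    unfolding is_form_def by blast
  show ?thesis unfolding is_form_def
    by (rule exI[of _ "\<lambda>\<alpha>. c \<alpha> + e \<alpha>"]) (simp add: c e sum.distrib distrib_right)
qed

lemma form_smult: "is_form n d f \<Longrightarrow> is_form n d (\<lambda>x. c * f x)"
proof -
  assume "is_form n d f"
  then obtain e where e: "\<And>x. f x = (\<Sum>\<alpha>\<in>mons_eq n d. e \<alpha> * monom_eval n \<alpha> x)"
    unfolding is_form_def by blast
  show ?thesis unfolding is_form_def
    by (rule exI[of _ "\<lambda>\<alpha>. c * e \<alpha>"]) (simp add: e sum_distrib_left mult.assoc)
qed

lemma form_sum: "finite A \<Longrightarrow> (\<And>a. a \<in> A \<Longrightarrow> is_form n d (f a)) \<Longrightarrow> is_form n d (\<lambda>x. \<Sum>a\<in>A. f a x)"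
  by (induction A rule: finite_induct) (auto intro: form_add form_zero)

lemma unit_in_mons: "i < n \<Longrightarrow> (\<lambda>j. if j = i then 1 else 0) \<in> mons_eq n 1"
  by (auto simp: mons_eq_def exps_def)

lemma form_var: assumes "i < n" shows "is_form n 1 (\<lambda>x. x i)"
proof -
  define e where "e = ((\<lambda>j. if j = i then 1 else 0) :: nat \<Rightarrow> nat)"
  have em: "e \<in> mons_eq n 1" using unit_in_mons[OF assms] by (simp add: e_def)
  have "(\<Sum>\<alpha>\<in>mons_eq n 1. (if \<alpha> = e then 1 else 0) * monom_eval n \<alpha> x) = monom_eval n e x" for x
  proof -
    have "(\<Sum>\<alpha>\<in>mons_eq n 1. (if \<alpha> = e then 1 else 0) * monom_eval n \<alpha> x)
        = (\<Sum>\<alpha>\<in>mons_eq n 1. (if \<alpha> = e then monom_eval n \<alpha> x else 0))"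
      by (intro sum.cong) auto
    also have "\<dots> = monom_eval n e x" using em finite_mons_eq by (simp add: sum.delta')
    finally show ?thesis .
  qed
  moreover have "monom_eval n e x = x i" for x
  proof -
    have "monom_eval n e x = (\<Prod>j<n. if j = i then x j else 1)"
      unfolding monom_eval_def e_def by (intro prod.cong) auto
    also have "\<dots> = x i" using assms by (simp add: prod.delta')
    finally show ?thesis .
  qed
  ultimately show ?thesis unfolding is_form_def by (intro exI[of _ "\<lambda>\<alpha>. if \<alpha> = e then 1 else 0"]) simp
qed

lemma mons_eq_0: "mons_eq n 0 = {\<lambda>_. 0}"
proof (intro set_eqI iffI)
  fix \<alpha> assume a: "\<alpha> \<in> mons_eq n 0"
  have "\<alpha> i = 0" for i
  proof (cases "i < n")
    case True then show ?thesis using a by (auto simp: mons_eq_def)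
  next
    case False then show ?thesis using a by (auto simp: mons_eq_def exps_def)
  qed
  then show "\<alpha> \<in> {\<lambda>_. 0}" by auto
qed (auto simp: mons_eq_def exps_def)

lemma form_const: "is_form n 0 (\<lambda>x. c)"
  unfolding is_form_def mons_eq_0 by (intro exI[of _ "\<lambda>_. c"]) (simp add: monom_eval_def)

lemma regroup:
  fixes a :: "'a \<Rightarrow> real"
  assumes "finite S" "finite T" "g ` S \<subseteq> T"
  shows "(\<Sum>x\<in>S. a x * m (g x)) = (\<Sum>y\<in>T. (\<Sum>x\<in>{x\<in>S. g x = y}. a x) * m y)"
proof -
  have "(\<Sum>x\<in>S. a x * m (g x)) = (\<Sum>y\<in>T. \<Sum>x\<in>{x. x\<in>S \<and> g x = y}. a x * m (g x))"
    using sum.group[OF assms, of "\<lambda>x. a x * m (g x)"] by simp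
  also have "\<dots> = (\<Sum>y\<in>T. (\<Sum>x\<in>{x\<in>S. g x = y}. a x) * m y)"
    by (intro sum.cong refl) (simp add: sum_distrib_right)
  finally show ?thesis .
qed

lemma form_mult:
  assumes "is_form n d f" "is_form n e g" shows "is_form n (d + e) (\<lambda>x. f x * g x)"
proof -
  obtain c where c: "\<And>x. f x = (\<Sum>\<alpha>\<in>mons_eq n d. c \<alpha> * monom_eval n \<alpha> x)"
    using assms(1) unfolding is_form_def by blast
  obtain c' where c': "\<And>x. g x = (\<Sum>\<alpha>\<in>mons_eq n e. c' \<alpha> * monom_eval n \<alpha> x)"
    using assms(2) unfolding is_form_def by blast
  let ?S = "mons_eq n d \<times> mons_eq n e"
  let ?pl = "\<lambda>p::(nat\<Rightarrow>nat)\<times>(nat\<Rightarrow>nat). (\<lambda>i. fst p i + snd p i)"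
  have img: "?pl ` ?S \<subseteq> mons_eq n (d + e)"
    by (auto simp: mons_eq_def exps_def sum.distrib)
  have "f x * g x = (\<Sum>\<gamma>\<in>mons_eq n (d+e). (\<Sum>p\<in>{p\<in>?S. ?pl p = \<gamma>}. c (fst p) * c' (snd p)) * monom_eval n \<gamma> x)" for x
  proof -
    have "f x * g x = (\<Sum>p\<in>?S. (c (fst p) * c' (snd p)) * monom_eval n (?pl p) x)"
      unfolding c c' sum_product sum.cartesian_product
      by (intro sum.cong refl) (auto simp: monom_eval_add)
    also have "\<dots> = (\<Sum>\<gamma>\<in>mons_eq n (d+e). (\<Sum>p\<in>{p\<in>?S. ?pl p = \<gamma>}. c (fst p) * c' (snd p)) * monom_eval n \<gamma> x)"
      by (rule regroup[OF _ finite_mons_eq img]) (simp add: finite_mons_eq)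
    finally show ?thesis .
  qed
  then show ?thesis unfolding is_form_def
    by (intro exI[of _ "\<lambda>\<gamma>. \<Sum>p\<in>{p\<in>?S. ?pl p = \<gamma>}. c (fst p) * c' (snd p)"]) blast
qed

lemma form_power: "is_form n d f \<Longrightarrow> is_form n (d * k) (\<lambda>x. f x ^ k)"
proof (induction k)
  case 0 then show ?case using form_const[of n 1] by simp
next
  case (Suc k)
  from form_mult[OF Suc.prems Suc.IH[OF Suc.prems]] show ?case by (simp add: algebra_simps)
qed

lemma form_prod: "finite A \<Longrightarrow> (\<And>a. a \<in> A \<Longrightarrow> is_form n (d a) (f a)) \<Longrightarrow> is_form n (\<Sum>a\<in>A. d a) (\<lambda>x. \<Prod>a\<in>A. f a x)"
proof (induction A rule: finite_induct)
  case empty then show ?case using form_const[of n 1] by simp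
next
  case (insert a A)
  then show ?case using form_mult[of n "d a" "f a" "sum d A" "\<lambda>x. \<Prod>a\<in>A. f a x"] by simp
qed

lemma form_comp_linear:
  assumes f: "is_form n d f" and L: "\<And>i. i < n \<Longrightarrow> is_form n 1 (\<lambda>x. L x i)"
  shows "is_form n d (\<lambda>x. f (L x))"
proof -
  obtain c where c: "\<And>x. f x = (\<Sum>\<alpha>\<in>mons_eq n d. c \<alpha> * monom_eval n \<alpha> x)"
    using f unfolding is_form_def by blast
  have "is_form n d (\<lambda>x. \<Sum>\<alpha>\<in>mons_eq n d. c \<alpha> * monom_eval n \<alpha> (L x))"
  proof (intro form_sum finite_mons_eq form_smult)
    fix \<alpha> assume a: "\<alpha> \<in> mons_eq n d"
    have "is_form n (\<Sum>i<n. 1 * \<alpha> i) (\<lambda>x. \<Prod>i<n. L x i ^ \<alpha> i)"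
      by (intro form_prod form_power L) auto
    then show "is_form n d (\<lambda>x. monom_eval n \<alpha> (L x))"
      using a by (simp add: monom_eval_def mons_eq_def)
  qed
  then show ?thesis by (simp add: c)
qed

lemma form_imp_poly: "is_form n d f \<Longrightarrow> is_poly n f"
proof -
  assume "is_form n d f"
  then obtain c where c: "\<And>x. f x = (\<Sum>\<alpha>\<in>mons_eq n d. c \<alpha> * monom_eval n \<alpha> x)"
    unfolding is_form_def by blast
  have "f x = (\<Sum>\<alpha>\<in>mons_le n d. (if \<alpha> \<in> mons_eq n d then c \<alpha> else 0) * monom_eval n \<alpha> x)" for x
  proof -
    have "(\<Sum>\<alpha>\<in>mons_le n d. (if \<alpha> \<in> mons_eq n d then c \<alpha> else 0) * monom_eval n \<alpha> x)
      = (\<Sum>\<alpha>\<in>mons_eq n d. (if \<alpha> \<in> mons_eq n d then c \<alpha> else 0) * monom_eval n \<alpha> x)"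
      by (rule sum.mono_neutral_right[OF finite_mons_le mons_eq_sub]) auto
    then show ?thesis unfolding c by simp
  qed
  then show ?thesis unfolding is_poly_def
    by (intro exI[of _ d] exI[of _ "\<lambda>\<alpha>. if \<alpha> \<in> mons_eq n d then c \<alpha> else 0"]) blast
qed

lemma poly_of_sum:
  assumes "finite A" "A \<subseteq> exps n"
  shows "is_poly n (\<lambda>x. \<Sum>\<alpha>\<in>A. c \<alpha> * monom_eval n \<alpha> x)"
proof -
  define D where "D = Max ((\<lambda>\<alpha>. \<Sum>i<n. \<alpha> i) ` A)"
  have img: "id ` A \<subseteq> mons_le n D"
    using assms by (auto simp: mons_le_def D_def)
  have "(\<Sum>\<alpha>\<in>A. c \<alpha> * monom_eval n \<alpha> x) = (\<Sum>\<beta>\<in>mons_le n D. (\<Sum>\<alpha>\<in>{\<alpha>\<in>A. id \<alpha> = \<beta>}. c \<alpha>) * monom_eval n \<beta> x)" for x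
    using regroup[OF assms(1) finite_mons_le img, of c "\<lambda>\<alpha>. monom_eval n \<alpha> x"] by simp
  then show ?thesis unfolding is_poly_def
    by (intro exI[of _ D] exI[of _ "\<lambda>\<beta>. \<Sum>\<alpha>\<in>{\<alpha>\<in>A. id \<alpha> = \<beta>}. c \<alpha>"]) blast
qed

lemma cont_line:
  "isCont (\<lambda>s. \<Sum>\<alpha>\<in>A. c \<alpha> * monom_eval n \<alpha> (\<lambda>i. u i + s * v i)) s0"
  unfolding monom_eval_def by (intro continuous_intros)

lemma form_cont_line:
  assumes "is_form n d f" shows "isCont (\<lambda>s. f (\<lambda>i. u i + s * v i)) s0"
proof -
  obtain c where c: "\<And>x. f x = (\<Sum>\<alpha>\<in>mons_eq n d. c \<alpha> * monom_eval n \<alpha> x)"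
    using assms unfolding is_form_def by blast
  show ?thesis unfolding c by (rule cont_line)
qed

lemma low_coeffs_zero:
  fixes b :: "nat \<Rightarrow> real"
  assumes dpos: "\<delta> > 0"
    and bnd: "\<And>s. s \<noteq> 0 \<Longrightarrow> \<bar>s\<bar> < \<delta> \<Longrightarrow> \<bar>\<Sum>j\<le>K. b j * s ^ j\<bar> \<le> C * \<bar>s\<bar> ^ k"
    and j: "j < k" "j \<le> K"
  shows "b j = 0"
proof (rule ccontr)
  assume "b j \<noteq> 0"
  define J where "J = {j. j < k \<and> j \<le> K \<and> b j \<noteq> 0}"
  have "j \<in> J" using j \<open>b j \<noteq> 0\<close> by (simp add: J_def)
  have finJ: "finite J" by (simp add: J_def)
  define j0 where "j0 = Min J"
  have j0J: "j0 \<in> J" using finJ \<open>j \<in> J\<close> unfolding j0_def by (intro Min_in) auto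
  have below: "b i = 0" if "i < j0" "i \<le> K" for i
  proof (rule ccontr)
    assume "b i \<noteq> 0"
    then have "i \<in> J" using that j0J by (auto simp: J_def)
    then have "j0 \<le> i" using finJ unfolding j0_def by simp
    with that show False by simp
  qed
  have j0k: "j0 < k" "j0 \<le> K" "b j0 \<noteq> 0" using j0J by (auto simp: J_def)
  define g where "g s = (\<Sum>i\<in>{j0..K}. b i * s ^ (i - j0))" for s :: real
  have split: "(\<Sum>i\<le>K. b i * s ^ i) = s ^ j0 * g s" for s
  proof -
    have "{..K} = {..<j0} \<union> {j0..K}" using j0k by auto
    then have "(\<Sum>i\<le>K. b i * s ^ i) = (\<Sum>i\<in>{..<j0}. b i * s ^ i) + (\<Sum>i\<in>{j0..K}. b i * s ^ i)"
      by (simp add: sum.union_disjoint ivl_disj_int)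
    also have "(\<Sum>i\<in>{..<j0}. b i * s ^ i) = 0"
      using below j0k by (intro sum.neutral) auto
    also have "(\<Sum>i\<in>{j0..K}. b i * s ^ i) = s ^ j0 * g s"
      unfolding g_def sum_distrib_left
      by (intro sum.cong refl) (simp add: power_add[symmetric])
    finally show ?thesis by simp
  qed
  have g0: "g 0 = b j0"
  proof -
    have "g 0 = (\<Sum>i\<in>{j0..K}. if i = j0 then b i else 0)"
      unfolding g_def by (intro sum.cong refl) auto
    also have "\<dots> = b j0" using j0k by (simp add: sum.delta)
    finally show ?thesis .
  qed
  have gcont: "(g \<longlongrightarrow> g 0) (at 0)"
    unfolding g_def by (intro tendsto_intros)
  have "(g \<longlongrightarrow> 0) (at (0::real))"
  proof (rule Lim_null_comparison)
    show "\<forall>\<^sub>F s in at 0. norm (g s) \<le> C * \<bar>s\<bar> ^ (k - j0)"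
      unfolding eventually_at
    proof (intro exI[of _ \<delta>] conjI dpos ballI impI)
      fix s :: real assume s: "s \<noteq> 0 \<and> dist s 0 < \<delta>"
      then have "\<bar>s ^ j0 * g s\<bar> \<le> C * \<bar>s\<bar> ^ k" using bnd[of s] split[of s] by simp
      also have "\<bar>s\<bar> ^ k = \<bar>s\<bar> ^ j0 * \<bar>s\<bar> ^ (k - j0)" using j0k by (simp add: power_add[symmetric])
      finally have "\<bar>s\<bar> ^ j0 * \<bar>g s\<bar> \<le> \<bar>s\<bar> ^ j0 * (C * \<bar>s\<bar> ^ (k - j0))"
        by (simp add: abs_mult power_abs algebra_simps)
      moreover have "\<bar>s\<bar> ^ j0 > 0" using s by simp
      ultimately show "norm (g s) \<le> C * \<bar>s\<bar> ^ (k - j0)" by simp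
    qed
    have "((\<lambda>s::real. C * \<bar>s\<bar> ^ (k - j0)) \<longlongrightarrow> C * \<bar>0\<bar> ^ (k - j0)) (at 0)"
      by (intro tendsto_intros)
    moreover have "C * \<bar>0::real\<bar> ^ (k - j0) = 0" using j0k by (simp add: zero_power)
    ultimately show "((\<lambda>s::real. C * \<bar>s\<bar> ^ (k - j0)) \<longlongrightarrow> 0) (at 0)" by (rule tendsto_eq_rhs)
  qed
  with gcont have "g 0 = 0" by (intro tendsto_unique[OF at_neq_bot]) 
  with g0 j0k show False by simp
qed

lemma form_of_square_bound:
  assumes F: "is_form n (2*D) F" and g: "is_poly n g" and bound: "\<And>x. (g x)\<^sup>2 \<le> F x"
  shows "is_form n D g"
proof -
  obtain E c where gc: "\<And>x. g x = (\<Sum>\<alpha>\<in>mons_le n E. c \<alpha> * monom_eval n \<alpha> x)"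
    using g unfolding is_poly_def by blast
  define G where "G j x = (\<Sum>\<alpha>\<in>mons_eq n j. c \<alpha> * monom_eval n \<alpha> x)" for j x
  define deg where "deg \<alpha> = (\<Sum>i<n. \<alpha> i)" for \<alpha> :: "nat \<Rightarrow> nat"
  have expand: "g (\<lambda>i. t * x i) = (\<Sum>j\<le>E. G j x * t ^ j)" for t x
  proof -
    have "g (\<lambda>i. t * x i) = (\<Sum>\<alpha>\<in>mons_le n E. (c \<alpha> * monom_eval n \<alpha> x) * t ^ deg \<alpha>)"
      unfolding gc by (intro sum.cong refl) (simp add: monom_eval_scale deg_def)
    also have "\<dots> = (\<Sum>j\<le>E. (\<Sum>\<alpha>\<in>{\<alpha>\<in>mons_le n E. deg \<alpha> = j}. c \<alpha> * monom_eval n \<alpha> x) * t ^ j)"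
      by (rule regroup[OF finite_mons_le]) (auto simp: mons_le_def deg_def)
    also have "\<dots> = (\<Sum>j\<le>E. G j x * t ^ j)"
    proof (intro sum.cong refl)
      fix j assume "j \<in> {..E}"
      then have "{\<alpha>\<in>mons_le n E. deg \<alpha> = j} = mons_eq n j"
        by (auto simp: mons_le_def mons_eq_def deg_def)
      then show "(\<Sum>\<alpha>\<in>{\<alpha>\<in>mons_le n E. deg \<alpha> = j}. c \<alpha> * monom_eval n \<alpha> x) * t ^ j = G j x * t ^ j"
        by (simp add: G_def)
    qed
    finally show ?thesis .
  qed
  have Fnn: "F x \<ge> 0" for x using bound[of x] by (meson order_trans zero_le_power2)
  have bnd: "\<bar>\<Sum>j\<le>E. G j x * t ^ j\<bar> \<le> sqrt (F x) * \<bar>t\<bar> ^ D" for t x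
  proof -
    have "(\<bar>g (\<lambda>i. t * x i)\<bar>)\<^sup>2 \<le> F (\<lambda>i. t * x i)" using bound by simp
    also have "\<dots> = (t ^ D)\<^sup>2 * F x" using form_homog[OF F] by (simp add: power_mult power2_eq_square mult_ac)
    finally have "\<bar>g (\<lambda>i. t * x i)\<bar> \<le> sqrt ((t ^ D)\<^sup>2 * F x)" by (rule real_le_rsqrt)
    also have "\<dots> = sqrt (F x) * \<bar>t\<bar> ^ D" by (simp add: real_sqrt_mult power_abs)
    finally show ?thesis using expand by simp
  qed
  have low: "G j x = 0" if "j < D" "j \<le> E" for j x
    using low_coeffs_zero[where \<delta>=1 and K=E and b="\<lambda>j. G j x" and C="sqrt (F x)" and k=D and j=j] bnd that by (simp add: mult_ac)
  have high: "G j x = 0" if "D < j" "j \<le> E" for j x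
  proof -
    have rev: "(\<Sum>i\<le>E. G (E - i) x * s ^ i) = s ^ E * (\<Sum>j\<le>E. G j x * (inverse s) ^ j)" if "s \<noteq> 0" for s :: real
    proof -
      have "(\<Sum>i\<le>E. G (E - i) x * s ^ i) = (\<Sum>j\<le>E. G j x * s ^ (E - j))"
        by (rule sum.reindex_bij_witness[where i="\<lambda>j. E - j" and j="\<lambda>i. E - i"]) auto
      also have "\<dots> = (\<Sum>j\<le>E. s ^ E * (G j x * (inverse s) ^ j))"
      proof (intro sum.cong refl)
        fix j assume "j \<in> {..E}"
        then have "s ^ E = s ^ (E - j) * s ^ j" by (simp add: power_add[symmetric])
        then show "G j x * s ^ (E - j) = s ^ E * (G j x * inverse s ^ j)"
          using \<open>s \<noteq> 0\<close> by (simp add: power_inverse field_simps)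
      qed
      finally show ?thesis by (simp add: sum_distrib_left)
    qed
    have DE: "D \<le> E" using that by simp
    have "G (E - (E - j)) x = 0"
    proof (rule low_coeffs_zero[where \<delta>=1 and K=E and b="\<lambda>i. G (E - i) x" and C="sqrt (F x)" and k="E - D"])
      fix s :: real assume s: "s \<noteq> 0" "\<bar>s\<bar> < 1"
      have "\<bar>\<Sum>i\<le>E. G (E - i) x * s ^ i\<bar> = \<bar>s\<bar> ^ E * \<bar>\<Sum>j\<le>E. G j x * (inverse s) ^ j\<bar>"
        using rev[OF s(1)] by (simp add: abs_mult power_abs)
      also have "\<dots> \<le> \<bar>s\<bar> ^ E * (sqrt (F x) * \<bar>inverse s\<bar> ^ D)"
        by (intro mult_left_mono bnd) simp
      also have "\<dots> = sqrt (F x) * \<bar>s\<bar> ^ (E - D)"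
      proof -
        have "\<bar>s\<bar> ^ E = \<bar>s\<bar> ^ (E - D) * \<bar>s\<bar> ^ D" using DE by (simp add: power_add[symmetric])
        then show ?thesis using s by (simp add: power_inverse abs_inverse field_simps)
      qed
      finally show "\<bar>\<Sum>i\<le>E. G (E - i) x * s ^ i\<bar> \<le> sqrt (F x) * \<bar>s\<bar> ^ (E - D)" .
    qed (use that in auto)
    then show ?thesis using that by simp
  qed
  have gx: "g x = (if D \<le> E then G D x else 0)" for x
  proof -
    have "g x = g (\<lambda>i. 1 * x i)" by simp
    also have "\<dots> = (\<Sum>j\<le>E. G j x)" using expand[of 1 x] by simp
    also have "\<dots> = (\<Sum>j\<le>E. if j = D then G j x else 0)"
      using low high by (intro sum.cong refl) (metis atMost_iff linorder_neqE_nat)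
    also have "\<dots> = (if D \<le> E then G D x else 0)" by (simp add: sum.delta)
    finally show ?thesis .
  qed
  show ?thesis unfolding is_form_def
    by (rule exI[of _ "\<lambda>\<alpha>. if D \<le> E then c \<alpha> else 0"]) (simp add: gx G_def)
qed

lemma monom_eval_Suc: "monom_eval (Suc n) \<beta> x = monom_eval n \<beta> x * x n ^ \<beta> n"
  by (simp add: monom_eval_def)

lemma monos_indep:
  "finite A \<Longrightarrow> A \<subseteq> exps n \<Longrightarrow> (\<And>x. (\<Sum>\<alpha>\<in>A. c \<alpha> * monom_eval n \<alpha> x) = 0) \<Longrightarrow> \<alpha> \<in> A \<Longrightarrow> c \<alpha> = 0"
proof (induction n arbitrary: A c \<alpha>)
  case 0
  have "A \<subseteq> {\<lambda>_. 0}" using 0(2) by (auto simp: exps_def)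
  with 0(4) have A: "A = {\<alpha>}" by auto
  have "(\<Sum>\<alpha>\<in>A. c \<alpha> * monom_eval 0 \<alpha> x) = c \<alpha>" for x
    unfolding A by (simp add: monom_eval_def)
  with 0(3) show ?case by metis
next
  case (Suc n)
  define K where "K = Max ((\<lambda>\<beta>. \<beta> n) ` A)"
  define B where "B j x = (\<Sum>\<beta>\<in>{\<beta>\<in>A. \<beta> n = j}. c \<beta> * monom_eval n \<beta> x)" for j x
  have expand: "(\<Sum>\<beta>\<in>A. c \<beta> * monom_eval (Suc n) \<beta> x) = (\<Sum>j\<le>K. B j x * (x n) ^ j)" for x
  proof -
    have "(\<Sum>\<beta>\<in>A. c \<beta> * monom_eval (Suc n) \<beta> x) = (\<Sum>\<beta>\<in>A. (c \<beta> * monom_eval n \<beta> x) * (x n) ^ (\<beta> n))"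
      by (simp add: monom_eval_Suc mult_ac)
    also have "\<dots> = (\<Sum>j\<le>K. (\<Sum>\<beta>\<in>{\<beta>\<in>A. \<beta> n = j}. c \<beta> * monom_eval n \<beta> x) * (x n) ^ j)"
      by (rule regroup) (use Suc.prems(1) in \<open>auto simp: K_def\<close>)
    finally show ?thesis by (simp add: B_def)
  qed
  have Bz: "B j x = 0" if "j \<le> K" for j x
  proof -
    have me: "monom_eval n \<beta> (x(n := s)) = monom_eval n \<beta> x" for \<beta> s
      by (rule monom_eval_cong) simp
    have "\<forall>s. (\<Sum>j\<le>K. B j x * s ^ j) = 0"
    proof
      fix s
      have "B j (x(n := s)) = B j x" for j by (simp add: B_def me)
      with expand[of "x(n := s)"] Suc.prems(3)[of "x(n := s)"]
      show "(\<Sum>j\<le>K. B j x * s ^ j) = 0" by simp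
    qed
    then show ?thesis using that polyfun_eq_0[of "\<lambda>j. B j x" K] by blast
  qed
  define j where "j = \<alpha> n"
  define Aj where "Aj = {\<beta>\<in>A. \<beta> n = j}"
  define r where "r \<beta> = \<beta>(n := 0)" for \<beta> :: "nat \<Rightarrow> nat"
  have inj: "inj_on r Aj"
  proof (rule inj_onI)
    fix \<beta> \<gamma> assume b: "\<beta> \<in> Aj" "\<gamma> \<in> Aj" "r \<beta> = r \<gamma>"
    show "\<beta> = \<gamma>"
    proof
      fix i show "\<beta> i = \<gamma> i"
        using fun_cong[OF b(3), of i] b(1,2) by (cases "i = n") (auto simp: r_def Aj_def)
    qed
  qed
  have rback: "(r \<beta>)(n := j) = \<beta>" if "\<beta> \<in> Aj" for \<beta>
    using that by (auto simp: r_def Aj_def)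
  have jK: "j \<le> K" using Suc.prems(1,4) by (auto simp: j_def K_def)
  have "c ((r \<alpha>)(n := j)) = 0"
  proof (rule Suc.IH[where A="r ` Aj" and c="\<lambda>\<gamma>. c (\<gamma>(n := j))" and \<alpha>="r \<alpha>", simplified])
    show "finite (r ` Aj)" using Suc.prems(1) by (simp add: Aj_def)
    show "r ` Aj \<subseteq> exps n" using Suc.prems(2) by (auto simp: exps_def r_def Aj_def)
    show "r \<alpha> \<in> r ` Aj" using Suc.prems(4) by (auto simp: Aj_def j_def)
    fix x
    have "(\<Sum>\<gamma>\<in>r ` Aj. c (\<gamma>(n := j)) * monom_eval n \<gamma> x) = (\<Sum>\<beta>\<in>Aj. c ((r \<beta>)(n := j)) * monom_eval n (r \<beta>) x)"
      by (simp add: sum.reindex[OF inj])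
    also have "\<dots> = (\<Sum>\<beta>\<in>Aj. c \<beta> * monom_eval n \<beta> x)"
      by (intro sum.cong refl) (simp add: rback, simp add: monom_eval_def r_def)
    also have "\<dots> = B j x" by (simp add: B_def Aj_def)
    also have "\<dots> = 0" using Bz[OF jK] .
    finally show "(\<Sum>\<gamma>\<in>r ` Aj. c (\<gamma>(n := j)) * monom_eval n \<gamma> x) = 0" .
  qed
  moreover have "(r \<alpha>)(n := j) = \<alpha>" using rback Suc.prems(4) by (simp add: Aj_def j_def)
  ultimately show ?case by simp
qed

lemma bw_finite:
  fixes f :: "nat \<Rightarrow> 'i \<Rightarrow> real"
  assumes "finite I" "\<And>j i. i \<in> I \<Longrightarrow> \<bar>f j i\<bar> \<le> B"
  shows "\<exists>r L. strict_mono r \<and> (\<forall>i\<in>I. (\<lambda>j. f (r j) i) \<longlonglongrightarrow> L i)"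
  using assms
proof (induction I rule: finite_induct)
  case empty
  show ?case by (intro exI[of _ id]) (auto simp: strict_mono_def)
next
  case (insert i0 I)
  then obtain r L where r: "strict_mono r" "\<forall>i\<in>I. (\<lambda>j. f (r j) i) \<longlonglongrightarrow> L i" by blast
  have "bounded (range (\<lambda>j. f (r j) i0))"
    unfolding bounded_iff using insert.prems by (intro exI[of _ B]) auto
  then obtain l r' where r': "strict_mono r'" "((\<lambda>j. f (r j) i0) \<circ> r') \<longlonglongrightarrow> l"
    using bounded_imp_convergent_subsequence by blast
  show ?case
  proof (intro exI[of _ "r \<circ> r'"] exI[of _ "L(i0 := l)"] conjI ballI)
    show "strict_mono (r \<circ> r')" using r(1) r'(1) by (simp add: strict_mono_def)
    fix i assume "i \<in> insert i0 I"
    then show "(\<lambda>j. f ((r \<circ> r') j) i) \<longlonglongrightarrow> (L(i0 := l)) i"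
    proof
      assume "i = i0" then show ?thesis using r'(2) by (simp add: o_def)
    next
      assume "i \<in> I"
      then have "((\<lambda>j. f (r j) i) \<circ> r') \<longlonglongrightarrow> L i" using r(2) r'(1) by (intro LIMSEQ_subseq_LIMSEQ) auto
      moreover have "i \<noteq> i0" using \<open>i \<in> I\<close> insert.hyps by auto
      ultimately show ?thesis by (simp add: o_def)
    qed
  qed
qed

lemma sos_closed:
  fixes \<phi> :: "'a \<Rightarrow> 'x \<Rightarrow> real" and C :: "nat \<Rightarrow> nat \<Rightarrow> 'a \<Rightarrow> real"
  assumes S: "finite S"
    and indep: "\<And>c. (\<And>x. (\<Sum>\<alpha>\<in>S. c \<alpha> * \<phi> \<alpha> x) = 0) \<Longrightarrow> \<forall>\<alpha>\<in>S. c \<alpha> = 0"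
    and rep: "\<And>j x. F j x = (\<Sum>k<N. (\<Sum>\<alpha>\<in>S. C j k \<alpha> * \<phi> \<alpha> x)\<^sup>2)"
    and lim: "\<And>x. (\<lambda>j. F j x) \<longlonglongrightarrow> Flim x"
  shows "\<exists>C0. \<forall>x. Flim x = (\<Sum>k<N. (\<Sum>\<alpha>\<in>S. C0 k \<alpha> * \<phi> \<alpha> x)\<^sup>2)"
proof -
  define M where "M j = (\<Sum>k<N. \<Sum>\<alpha>\<in>S. \<bar>C j k \<alpha>\<bar>)" for j
  define \<mu> where "\<mu> j = 1 / (M j + 1)" for j
  define Dn where "Dn j k \<alpha> = C j k \<alpha> * \<mu> j" for j k \<alpha>
  have Mnn: "M j \<ge> 0" for j unfolding M_def by (intro sum_nonneg) auto
  have mupos: "\<mu> j > 0" "\<mu> j \<le> 1" for j using Mnn[of j] by (auto simp: \<mu>_def)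
  have Cle: "\<bar>C j k \<alpha>\<bar> \<le> M j" if "k < N" "\<alpha> \<in> S" for j k \<alpha>
  proof -
    have "\<bar>C j k \<alpha>\<bar> \<le> (\<Sum>\<alpha>\<in>S. \<bar>C j k \<alpha>\<bar>)" using S that by (intro member_le_sum) auto
    also have "\<dots> \<le> M j" unfolding M_def using that by (intro member_le_sum[of k]) (auto intro: sum_nonneg)
    finally show ?thesis .
  qed
  have Dle: "\<bar>Dn j k \<alpha>\<bar> \<le> 1" if "k < N" "\<alpha> \<in> S" for j k \<alpha>
  proof -
    have "\<bar>Dn j k \<alpha>\<bar> = \<bar>C j k \<alpha>\<bar> / (M j + 1)" using Mnn[of j] by (simp add: Dn_def \<mu>_def abs_mult)
    also have "\<dots> \<le> 1" using Cle[OF that, of j] Mnn[of j] by simp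
    finally show ?thesis .
  qed
  define f where "f j i = (case i of None \<Rightarrow> \<mu> j | Some p \<Rightarrow> Dn j (fst p) (snd p))" for j i
  define I where "I = insert None (Some ` ({..<N} \<times> S))"
  have "finite I" using S by (simp add: I_def)
  moreover have "\<bar>f j i\<bar> \<le> 1" if "i \<in> I" for j i
    using that mupos[of j] Dle by (auto simp: f_def I_def)
  ultimately obtain r L where r: "strict_mono r" "\<forall>i\<in>I. (\<lambda>j. f (r j) i) \<longlonglongrightarrow> L i"
    using bw_finite by blast
  define \<mu>0 where "\<mu>0 = L None"
  define D0 where "D0 k \<alpha> = L (Some (k, \<alpha>))" for k \<alpha>
  have mulim: "(\<lambda>j. \<mu> (r j)) \<longlonglongrightarrow> \<mu>0" using r(2) by (auto simp: I_def f_def \<mu>0_def)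
  have Dlim: "(\<lambda>j. Dn (r j) k \<alpha>) \<longlonglongrightarrow> D0 k \<alpha>" if "k < N" "\<alpha> \<in> S" for k \<alpha>
    using r(2) that by (auto simp: I_def f_def D0_def)
  have key: "\<mu>0\<^sup>2 * Flim x = (\<Sum>k<N. (\<Sum>\<alpha>\<in>S. D0 k \<alpha> * \<phi> \<alpha> x)\<^sup>2)" for x
  proof -
    have eq: "(\<mu> j)\<^sup>2 * F j x = (\<Sum>k<N. (\<Sum>\<alpha>\<in>S. Dn j k \<alpha> * \<phi> \<alpha> x)\<^sup>2)" for j
    proof -
      have "(\<mu> j)\<^sup>2 * F j x = (\<Sum>k<N. (\<mu> j)\<^sup>2 * (\<Sum>\<alpha>\<in>S. C j k \<alpha> * \<phi> \<alpha> x)\<^sup>2)"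
        by (simp add: rep sum_distrib_left)
      also have "\<dots> = (\<Sum>k<N. (\<mu> j * (\<Sum>\<alpha>\<in>S. C j k \<alpha> * \<phi> \<alpha> x))\<^sup>2)"
        by (simp add: power_mult_distrib)
      also have "\<dots> = (\<Sum>k<N. (\<Sum>\<alpha>\<in>S. Dn j k \<alpha> * \<phi> \<alpha> x)\<^sup>2)"
        by (simp add: sum_distrib_left Dn_def mult_ac)
      finally show ?thesis .
    qed
    have "(\<lambda>j. (\<mu> (r j))\<^sup>2 * F (r j) x) \<longlonglongrightarrow> \<mu>0\<^sup>2 * Flim x"
      using mulim LIMSEQ_subseq_LIMSEQ[OF lim r(1)] by (intro tendsto_intros) (auto simp: o_def)
    moreover have "(\<lambda>j. (\<Sum>k<N. (\<Sum>\<alpha>\<in>S. Dn (r j) k \<alpha> * \<phi> \<alpha> x)\<^sup>2)) \<longlonglongrightarrow> (\<Sum>k<N. (\<Sum>\<alpha>\<in>S. D0 k \<alpha> * \<phi> \<alpha> x)\<^sup>2)"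
      by (intro tendsto_sum tendsto_power tendsto_mult_right Dlim) auto
    ultimately show ?thesis unfolding eq by (rule LIMSEQ_unique)
  qed
  show ?thesis
  proof (cases "\<mu>0 = 0")
    case False
    show ?thesis
    proof (intro exI[of _ "\<lambda>k \<alpha>. D0 k \<alpha> / \<mu>0"] allI)
      fix x
      have "(\<Sum>k<N. (\<Sum>\<alpha>\<in>S. D0 k \<alpha> / \<mu>0 * \<phi> \<alpha> x)\<^sup>2) = (\<Sum>k<N. (\<Sum>\<alpha>\<in>S. D0 k \<alpha> * \<phi> \<alpha> x)\<^sup>2) / \<mu>0\<^sup>2"
        by (simp add: sum_divide_distrib[symmetric] power_divide)
      also have "\<dots> = Flim x" using key[of x] False by (simp add: field_simps)
      finally show "Flim x = (\<Sum>k<N. (\<Sum>\<alpha>\<in>S. D0 k \<alpha> / \<mu>0 * \<phi> \<alpha> x)\<^sup>2)" by simp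
    qed
  next
    case True
    have zero: "D0 k \<alpha> = 0" if "k < N" "\<alpha> \<in> S" for k \<alpha>
    proof -
      have "(\<Sum>\<alpha>\<in>S. D0 k \<alpha> * \<phi> \<alpha> x) = 0" for x
      proof -
        have "(\<Sum>k<N. (\<Sum>\<alpha>\<in>S. D0 k \<alpha> * \<phi> \<alpha> x)\<^sup>2) = 0" using key[of x] True by simp
        then have "\<forall>k\<in>{..<N}. (\<Sum>\<alpha>\<in>S. D0 k \<alpha> * \<phi> \<alpha> x)\<^sup>2 = 0"
          by (subst (asm) sum_nonneg_eq_0_iff) auto
        then show ?thesis using that by simp
      qed
      then show ?thesis using indep[of "D0 k"] that by blast
    qed
    have sumD: "(\<Sum>k<N. \<Sum>\<alpha>\<in>S. \<bar>Dn j k \<alpha>\<bar>) = 1 - \<mu> j" for j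
    proof -
      have "(\<Sum>k<N. \<Sum>\<alpha>\<in>S. \<bar>Dn j k \<alpha>\<bar>) = M j * \<mu> j"
        using mupos[of j] by (simp add: Dn_def M_def abs_mult sum_distrib_right)
      also have "\<dots> = 1 - \<mu> j" using Mnn[of j] by (simp add: \<mu>_def field_simps)
      finally show ?thesis .
    qed
    have "(\<lambda>j. (\<Sum>k<N. \<Sum>\<alpha>\<in>S. \<bar>Dn (r j) k \<alpha>\<bar>)) \<longlonglongrightarrow> (\<Sum>k<N. \<Sum>\<alpha>\<in>S. \<bar>D0 k \<alpha>\<bar>)"
      by (intro tendsto_sum tendsto_rabs Dlim) auto
    also have "(\<Sum>k<N. \<Sum>\<alpha>\<in>S. \<bar>D0 k \<alpha>\<bar>) = 0" using zero by simp
    finally have "(\<lambda>j. 1 - \<mu> (r j)) \<longlonglongrightarrow> 0" unfolding sumD .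
    moreover have "(\<lambda>j. 1 - \<mu> (r j)) \<longlonglongrightarrow> 1 - \<mu>0" using mulim by (intro tendsto_intros)
    ultimately have "1 - \<mu>0 = 0" using LIMSEQ_unique by blast
    with True show ?thesis by simp
  qed
qed

definition lin :: "'a set \<Rightarrow> ('a \<Rightarrow> 'x \<Rightarrow> real) \<Rightarrow> ('a \<Rightarrow> real) \<Rightarrow> 'x \<Rightarrow> real" where
  "lin T \<phi> c x = (\<Sum>\<alpha>\<in>T. c \<alpha> * \<phi> \<alpha> x)"

lemma lin_comb: "lin T \<phi> (\<lambda>\<alpha>. a * c \<alpha> + b * u \<alpha>) x = a * lin T \<phi> c x + b * lin T \<phi> u x"
  by (simp add: lin_def sum.distrib sum_distrib_left algebra_simps)

lemma givens_combine:
  "\<exists>u vs. (\<forall>v\<in>set vs. v \<beta> = 0) \<and> (\<forall>x. (\<Sum>c\<leftarrow>cs. (lin T \<phi> c x)\<^sup>2) = (lin T \<phi> u x)\<^sup>2 + (\<Sum>v\<leftarrow>vs. (lin T \<phi> v x)\<^sup>2))"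
proof (induction cs)
  case Nil
  show ?case by (intro exI[of _ "\<lambda>_. 0"] exI[of _ "[]"]) (simp add: lin_def)
next
  case (Cons c cs)
  then obtain u vs where uv: "\<forall>v\<in>set vs. v \<beta> = 0"
    "\<forall>x. (\<Sum>c\<leftarrow>cs. (lin T \<phi> c x)\<^sup>2) = (lin T \<phi> u x)\<^sup>2 + (\<Sum>v\<leftarrow>vs. (lin T \<phi> v x)\<^sup>2)" by blast
  define a where "a = c \<beta>"
  define b where "b = u \<beta>"
  show ?case
  proof (cases "a = 0 \<and> b = 0")
    case True
    show ?thesis
      by (intro exI[of _ u] exI[of _ "c # vs"]) (use True uv in \<open>auto simp: a_def\<close>)
  next
    case False
    define \<rho> where "\<rho> = sqrt (a\<^sup>2 + b\<^sup>2)"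
    have rpos: "\<rho> > 0" using False unfolding \<rho>_def by (simp add: add_pos_nonneg add_nonneg_pos sum_power2_gt_zero_iff)
    have r2: "\<rho>\<^sup>2 = a\<^sup>2 + b\<^sup>2" unfolding \<rho>_def by simp
    define u' where "u' = (\<lambda>\<alpha>. (a / \<rho>) * c \<alpha> + (b / \<rho>) * u \<alpha>)"
    define w where "w = (\<lambda>\<alpha>. (- b / \<rho>) * c \<alpha> + (a / \<rho>) * u \<alpha>)"
    show ?thesis
    proof (intro exI[of _ u'] exI[of _ "w # vs"] conjI allI)
      show "\<forall>v\<in>set (w # vs). v \<beta> = 0" using uv(1) by (simp add: w_def a_def b_def algebra_simps)
      fix x
      define X where "X = lin T \<phi> c x"
      define Y where "Y = lin T \<phi> u x"
      have "(lin T \<phi> u' x)\<^sup>2 + (lin T \<phi> w x)\<^sup>2 = ((a * X + b * Y)\<^sup>2 + (- b * X + a * Y)\<^sup>2) / \<rho>\<^sup>2"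
        unfolding u'_def w_def lin_comb X_def Y_def using rpos by (simp add: field_simps power2_eq_square)
      also have "\<dots> = (X\<^sup>2 + Y\<^sup>2) * \<rho>\<^sup>2 / \<rho>\<^sup>2" unfolding r2 by (simp add: power2_eq_square algebra_simps)
      also have "\<dots> = X\<^sup>2 + Y\<^sup>2" using rpos by simp
      finally show "(\<Sum>c\<leftarrow>c # cs. (lin T \<phi> c x)\<^sup>2) = (lin T \<phi> u' x)\<^sup>2 + (\<Sum>v\<leftarrow>w # vs. (lin T \<phi> v x)\<^sup>2)"
        using uv(2) by (simp add: X_def Y_def)
    qed
  qed
qed

lemma givens_reduce:
  "finite S \<Longrightarrow> \<exists>C. \<forall>x. (\<Sum>c\<leftarrow>cs. (lin S \<phi> c x)\<^sup>2) = (\<Sum>k<card S. (lin S \<phi> (C k) x)\<^sup>2)"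
proof (induction S arbitrary: cs rule: finite_induct)
  case empty
  show ?case by (simp add: lin_def)
next
  case (insert \<beta> S)
  obtain u vs where uv: "\<forall>v\<in>set vs. v \<beta> = 0"
    "\<forall>x. (\<Sum>c\<leftarrow>cs. (lin (insert \<beta> S) \<phi> c x)\<^sup>2) = (lin (insert \<beta> S) \<phi> u x)\<^sup>2 + (\<Sum>v\<leftarrow>vs. (lin (insert \<beta> S) \<phi> v x)\<^sup>2)"
    using givens_combine[where \<beta>=\<beta> and cs=cs and T="insert \<beta> S" and \<phi>=\<phi>] by blast
  obtain C' where C': "\<forall>x. (\<Sum>v\<leftarrow>vs. (lin S \<phi> v x)\<^sup>2) = (\<Sum>k<card S. (lin S \<phi> (C' k) x)\<^sup>2)"
    using insert.IH[of vs] by blast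
  have l1: "lin (insert \<beta> S) \<phi> v x = lin S \<phi> v x" if "v \<beta> = 0" for v x
    using insert.hyps that by (simp add: lin_def)
  have l2: "lin (insert \<beta> S) \<phi> ((C' k)(\<beta> := 0)) x = lin S \<phi> (C' k) x" for k x
    using insert.hyps by (simp add: lin_def) (intro sum.cong refl, auto)
  have vs_eq: "(\<Sum>v\<leftarrow>vs. (lin (insert \<beta> S) \<phi> v x)\<^sup>2) = (\<Sum>v\<leftarrow>vs. (lin S \<phi> v x)\<^sup>2)" for x
  proof -
    have "map (\<lambda>v. (lin (insert \<beta> S) \<phi> v x)\<^sup>2) vs = map (\<lambda>v. (lin S \<phi> v x)\<^sup>2) vs"
      using uv(1) l1 by (intro map_cong) auto
    then show ?thesis by (rule arg_cong[where f=sum_list])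
  qed
  show ?case
  proof (intro exI[of _ "\<lambda>k. if k = 0 then u else (C' (k - 1))(\<beta> := 0)"] allI)
    fix x
    have "(\<Sum>k<card (insert \<beta> S). (lin (insert \<beta> S) \<phi> (if k = 0 then u else (C' (k - 1))(\<beta> := 0)) x)\<^sup>2)
        = (lin (insert \<beta> S) \<phi> u x)\<^sup>2 + (\<Sum>k<card S. (lin S \<phi> (C' k) x)\<^sup>2)"
    proof -
      have c: "card (insert \<beta> S) = Suc (card S)" using insert.hyps by simp
      show ?thesis unfolding c sum.lessThan_Suc_shift by (simp add: l2)
    qed
    then show "(\<Sum>c\<leftarrow>cs. (lin (insert \<beta> S) \<phi> c x)\<^sup>2) = (\<Sum>k<card (insert \<beta> S). (lin (insert \<beta> S) \<phi> (if k = 0 then u else (C' (k - 1))(\<beta> := 0)) x)\<^sup>2)"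
      using uv(2) C' vs_eq by simp
  qed
qed

lemma sq_le_sos: fixes g :: "'a \<Rightarrow> real" shows "g \<in> set hs \<Longrightarrow> (g x)\<^sup>2 \<le> (\<Sum>h\<leftarrow>hs. (h x)\<^sup>2)"
proof (induction hs)
  case (Cons h hs)
  have "0 \<le> (\<Sum>h\<leftarrow>hs. (h x)\<^sup>2)" by (induction hs) auto
  with Cons show ?case using zero_le_power2[of "h x"] by (auto intro: add_increasing2 add_increasing)
qed simp

lemma sos_nonneg: shows "is_sos n f \<Longrightarrow> 0 \<le> f x"
proof -
  assume "is_sos n f"
  then obtain hs where "\<forall>x. f x = (\<Sum>h\<leftarrow>hs. (h x)\<^sup>2)" unfolding is_sos_def by blast
  moreover have "0 \<le> (\<Sum>h\<leftarrow>hs. (h x)\<^sup>2)" by (induction hs) auto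
  ultimately show ?thesis by simp
qed

lemma form_lin2: "i < n \<Longrightarrow> j < n \<Longrightarrow> is_form n 1 (\<lambda>x. a * x i + b * x j)"
  by (intro form_add form_smult form_var)

lemma limit_step:
  fixes a :: "nat \<Rightarrow> real"
  assumes n: "n \<ge> 1" and hf: "is_form n d h" and qf: "is_form n m q" and qpsd: "\<And>x. q x \<ge> 0"
    and hall: "\<forall>p\<in>P_set n m. is_sos n (\<lambda>x. h x * p x)"
    and dm: "d + m = 2 * D" and a0: "a 0 > 0"
  shows "\<exists>C0. \<forall>y. h a * y 0 ^ d * q y = (\<Sum>k<card (mons_eq n D). (\<Sum>\<alpha>\<in>mons_eq n D. C0 k \<alpha> * monom_eval n \<alpha> y)\<^sup>2)"
proof -
  define S where "S = mons_eq n D"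
  define N where "N = card S"
  define Mt where "Mt t y = (\<lambda>i. t * y i + a i * y 0)" for t :: real and y :: "nat \<Rightarrow> real"
  define Nt where "Nt t x = (\<lambda>i. (1 / t) * x i + (- a i / ((t + a 0) * t)) * x 0)" for t :: real and x :: "nat \<Rightarrow> real"
  have n0: "0 < n" using n by simp
  have step: "\<exists>C. \<forall>y. h (Mt t y) * q y = (\<Sum>k<N. (\<Sum>\<alpha>\<in>S. C k \<alpha> * monom_eval n \<alpha> y)\<^sup>2)" if t: "t > 0" for t
  proof -
    have ta: "t + a 0 > 0" using t a0 by simp
    define p where "p x = q (Nt t x)" for x
    have pf: "is_form n m p" unfolding p_def
    proof (rule form_comp_linear[OF qf])
      fix i assume "i < n"
      show "is_form n 1 (\<lambda>x. Nt t x i)" unfolding Nt_def by (rule form_lin2[OF \<open>i < n\<close> n0])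
    qed
    then have "p \<in> P_set n m" using qpsd by (simp add: P_set_def psd_def p_def)
    with hall obtain hs where hs: "\<forall>g\<in>set hs. is_poly n g" "\<forall>x. h x * p x = (\<Sum>g\<leftarrow>hs. (g x)\<^sup>2)"
      unfolding is_sos_def by blast
    have hp: "is_form n (2 * D) (\<lambda>x. h x * p x)" using form_mult[OF hf pf] dm by simp
    have gD: "is_form n D g" if "g \<in> set hs" for g
      using form_of_square_bound[OF hp] hs that sq_le_sos by metis
    have NM: "Nt t (Mt t y) = y" for y
    proof
      fix i
      have "Nt t (Mt t y) i = (1 / t) * (t * y i + a i * y 0) + (- a i / ((t + a 0) * t)) * (t * y 0 + a 0 * y 0)"
        by (simp add: Nt_def Mt_def)
      also have "\<dots> = y i + a i * y 0 / t - a i * y 0 * (t + a 0) / ((t + a 0) * t)"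
        using t by (simp add: field_simps)
      also have "\<dots> = y i" using t ta by simp
      finally show "Nt t (Mt t y) i = y i" .
    qed
    have gM: "is_form n D (\<lambda>y. g (Mt t y))" if "g \<in> set hs" for g
    proof (rule form_comp_linear[OF gD[OF that]])
      fix i assume "i < n"
      show "is_form n 1 (\<lambda>y. Mt t y i)" unfolding Mt_def by (rule form_lin2[OF \<open>i < n\<close> n0])
    qed
    define cf where "cf g = (SOME c. \<forall>y. g (Mt t y) = lin S (monom_eval n) c y)" for g
    have cf: "g (Mt t y) = lin S (monom_eval n) (cf g) y" if "g \<in> set hs" for g y
    proof -
      have "\<exists>c. \<forall>y. g (Mt t y) = lin S (monom_eval n) c y"
        using gM[OF that] unfolding is_form_def lin_def S_def by blast
      then show ?thesis unfolding cf_def by (rule someI_ex[where P="\<lambda>c. \<forall>y. g (Mt t y) = lin S (monom_eval n) c y", rule_format])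
    qed
    obtain C where C: "\<forall>y. (\<Sum>c\<leftarrow>map cf hs. (lin S (monom_eval n) c y)\<^sup>2) = (\<Sum>k<card S. (lin S (monom_eval n) (C k) y)\<^sup>2)"
      using givens_reduce[where S=S and cs="map cf hs" and \<phi>="monom_eval n"] finite_mons_eq unfolding S_def by blast
    show ?thesis
    proof (intro exI[of _ C] allI)
      fix y
      have "h (Mt t y) * q y = h (Mt t y) * p (Mt t y)" by (simp add: p_def NM)
      also have "\<dots> = (\<Sum>g\<leftarrow>hs. (g (Mt t y))\<^sup>2)" using hs(2) by simp
      also have "\<dots> = (\<Sum>g\<leftarrow>hs. (lin S (monom_eval n) (cf g) y)\<^sup>2)"
      proof -
        have "map (\<lambda>g. (g (Mt t y))\<^sup>2) hs = map (\<lambda>g. (lin S (monom_eval n) (cf g) y)\<^sup>2) hs"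
          using cf by (intro map_cong) auto
        then show ?thesis by (rule arg_cong[where f=sum_list])
      qed
      also have "\<dots> = (\<Sum>c\<leftarrow>map cf hs. (lin S (monom_eval n) c y)\<^sup>2)" by (simp add: o_def)
      also have "\<dots> = (\<Sum>k<N. (\<Sum>\<alpha>\<in>S. C k \<alpha> * monom_eval n \<alpha> y)\<^sup>2)" using C by (simp add: N_def lin_def)
      finally show "h (Mt t y) * q y = (\<Sum>k<N. (\<Sum>\<alpha>\<in>S. C k \<alpha> * monom_eval n \<alpha> y)\<^sup>2)" .
    qed
  qed
  define tt where "tt j = inverse (real (Suc j))" for j
  have "\<forall>j. \<exists>C. \<forall>y. h (Mt (tt j) y) * q y = (\<Sum>k<N. (\<Sum>\<alpha>\<in>S. C k \<alpha> * monom_eval n \<alpha> y)\<^sup>2)"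
    using step by (simp add: tt_def)
  then obtain Cs where Cs0: "\<forall>j. \<forall>y. h (Mt (tt j) y) * q y = (\<Sum>k<N. (\<Sum>\<alpha>\<in>S. Cs j k \<alpha> * monom_eval n \<alpha> y)\<^sup>2)"
    by (auto dest!: choice)
  have Cs: "\<And>j y. h (Mt (tt j) y) * q y = (\<Sum>k<N. (\<Sum>\<alpha>\<in>S. Cs j k \<alpha> * monom_eval n \<alpha> y)\<^sup>2)"
    using Cs0 by blast
  have lim: "(\<lambda>j. h (Mt (tt j) y) * q y) \<longlonglongrightarrow> h a * y 0 ^ d * q y" for y
  proof -
    have ic: "isCont (\<lambda>s. h (\<lambda>i. y 0 * a i + s * y i)) 0" by (rule form_cont_line[OF hf])
    have "(\<lambda>j. h (\<lambda>i. y 0 * a i + tt j * y i)) \<longlonglongrightarrow> h (\<lambda>i. y 0 * a i + 0 * y i)"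
      by (rule isCont_tendsto_compose[OF ic]) (unfold tt_def, rule LIMSEQ_inverse_real_of_nat)
    moreover have "h (\<lambda>i. y 0 * a i + 0 * y i) = h a * y 0 ^ d"
      using form_homog[OF hf, of "y 0" a] by simp
    moreover have "(\<lambda>i. y 0 * a i + tt j * y i) = Mt (tt j) y" for j by (auto simp: Mt_def)
    ultimately have "(\<lambda>j. h (Mt (tt j) y)) \<longlonglongrightarrow> h a * y 0 ^ d" by simp
    then show ?thesis by (intro tendsto_mult_right)
  qed
  have indep: "\<forall>\<alpha>\<in>S. c \<alpha> = 0" if "\<And>x. (\<Sum>\<alpha>\<in>S. c \<alpha> * monom_eval n \<alpha> x) = 0" for c
    using monos_indep[of S n c] that finite_mons_eq unfolding S_def by (auto simp: mons_eq_def)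
  have "\<exists>C0. \<forall>x. h a * x 0 ^ d * q x = (\<Sum>k<N. (\<Sum>\<alpha>\<in>S. C0 k \<alpha> * monom_eval n \<alpha> x)\<^sup>2)"
  proof (rule sos_closed[where S=S and \<phi>="monom_eval n" and F="\<lambda>j y. h (Mt (tt j) y) * q y" and N=N and C=Cs and Flim="\<lambda>y. h a * y 0 ^ d * q y"])
    show "finite S" using finite_mons_eq by (simp add: S_def)
    show "\<forall>\<alpha>\<in>S. c \<alpha> = 0" if "\<And>x. (\<Sum>\<alpha>\<in>S. c \<alpha> * monom_eval n \<alpha> x) = 0" for c
      using indep that by blast
  qed (use Cs lim in auto)
  then show ?thesis by (simp add: S_def N_def)
qed

lemma poly_of_sum2:
  assumes "finite A" "g ` A \<subseteq> exps n"
  shows "is_poly n (\<lambda>x. \<Sum>a\<in>A. c a * monom_eval n (g a) x)"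
proof -
  define D where "D = Max ((\<lambda>a. \<Sum>i<n. g a i) ` A)"
  have img: "g ` A \<subseteq> mons_le n D"
    using assms by (auto simp: mons_le_def D_def)
  have "(\<Sum>a\<in>A. c a * monom_eval n (g a) x) = (\<Sum>\<beta>\<in>mons_le n D. (\<Sum>a\<in>{a\<in>A. g a = \<beta>}. c a) * monom_eval n \<beta> x)" for x
    using regroup[OF assms(1) finite_mons_le img, of c "\<lambda>\<beta>. monom_eval n \<beta> x"] by simp
  then show ?thesis unfolding is_poly_def
    by (intro exI[of _ D] exI[of _ "\<lambda>\<beta>. \<Sum>a\<in>{a\<in>A. g a = \<beta>}. c a"]) blast
qed

lemma cont_line2:
  "isCont (\<lambda>s. \<Sum>a\<in>A. c a * monom_eval n (g a) (\<lambda>i. u i + s * v i)) s0"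
  unfolding monom_eval_def by (intro continuous_intros)

lemma division_step:
  fixes C :: "nat \<Rightarrow> (nat \<Rightarrow> nat) \<Rightarrow> real"
  assumes n: "n \<ge> 1" and qf: "is_form n m q"
    and rep: "\<And>y. y 0 ^ (2*e) * q y = (\<Sum>k<N. (\<Sum>\<alpha>\<in>S. C k \<alpha> * monom_eval n \<alpha> y)\<^sup>2)"
    and S: "S = mons_eq n D" and eD: "e \<le> D"
  shows "is_sos n q"
proof -
  have n0: "0 < n" using n by simp
  have finS: "finite S" using finite_mons_eq S by simp
  define R where "R \<alpha> z = (\<Prod>i\<in>{..<n}-{0}. z i ^ \<alpha> i)" for \<alpha> :: "nat \<Rightarrow> nat" and z :: "nat \<Rightarrow> real"
  have mon0: "monom_eval n \<alpha> z = z 0 ^ \<alpha> 0 * R \<alpha> z" for \<alpha> z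
    unfolding monom_eval_def R_def using n0 by (simp add: prod.remove[of "{..<n}" 0])
  have Rupd: "R \<alpha> (z(0 := s)) = R \<alpha> z" for \<alpha> z s
    unfolding R_def by (intro prod.cong) auto
  have Rupd2: "R (\<alpha>(0 := k)) z = R \<alpha> z" for \<alpha> z k
    unfolding R_def by (intro prod.cong) auto
  define G where "G k j z = (\<Sum>\<alpha>\<in>{\<alpha>\<in>S. \<alpha> 0 = j}. C k \<alpha> * R \<alpha> z)" for k j z
  have a0D: "\<alpha> 0 \<le> D" if "\<alpha> \<in> S" for \<alpha>
  proof -
    have "\<alpha> 0 \<le> (\<Sum>i<n. \<alpha> i)" using n0 by (intro member_le_sum) auto
    then show ?thesis using that S by (simp add: mons_eq_def)
  qed
  have expand: "(\<Sum>\<alpha>\<in>S. C k \<alpha> * monom_eval n \<alpha> z) = (\<Sum>j\<le>D. G k j z * z 0 ^ j)" for k z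
  proof -
    have "(\<Sum>\<alpha>\<in>S. C k \<alpha> * monom_eval n \<alpha> z) = (\<Sum>\<alpha>\<in>S. (C k \<alpha> * R \<alpha> z) * z 0 ^ (\<alpha> 0))"
      by (simp add: mon0 mult_ac)
    also have "\<dots> = (\<Sum>j\<le>D. (\<Sum>\<alpha>\<in>{\<alpha>\<in>S. \<alpha> 0 = j}. C k \<alpha> * R \<alpha> z) * z 0 ^ j)"
      by (rule regroup[OF finS]) (auto simp: a0D)
    finally show ?thesis by (simp add: G_def)
  qed
  have GRupd: "G k j (z(0 := s)) = G k j z" for k j z s by (simp add: G_def Rupd)
  have low: "G k j y = 0" if "k < N" "j < e" for k j y
  proof -
    define u where "u = y(0 := 0)"
    define v where "v = (\<lambda>i::nat. if i = 0 then 1 else (0::real))"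
    have uv: "(\<lambda>i. u i + s * v i) = y(0 := s)" for s by (auto simp: u_def v_def)
    have "isCont (\<lambda>s. q (\<lambda>i. u i + s * v i)) 0" by (rule form_cont_line[OF qf])
    then have "(\<lambda>s. q (y(0 := s))) \<midarrow>0\<rightarrow> q (y(0 := 0))" unfolding uv isCont_def by simp
    from LIM_D[OF this, of 1] obtain \<delta> where \<delta>: "\<delta> > 0"
      "\<And>s. s \<noteq> 0 \<and> norm (s - 0) < \<delta> \<Longrightarrow> norm (q (y(0 := s)) - q (y(0 := 0))) < 1" by auto
    define B where "B = \<bar>q (y(0 := 0))\<bar> + 1"
    show ?thesis
    proof (rule low_coeffs_zero[where \<delta>=\<delta> and K=D and b="\<lambda>j. G k j y" and C="sqrt B" and k=e])
      fix s :: real assume s: "s \<noteq> 0" "\<bar>s\<bar> < \<delta>"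
      have qb: "q (y(0 := s)) \<le> B" using \<delta>(2)[of s] s by (auto simp: B_def)
      have ps: "(\<Sum>j\<le>D. G k j y * s ^ j) = (\<Sum>\<alpha>\<in>S. C k \<alpha> * monom_eval n \<alpha> (y(0 := s)))"
        using expand[of k "y(0 := s)"] by (simp add: GRupd)
      have "(\<Sum>j\<le>D. G k j y * s ^ j)\<^sup>2 \<le> (\<Sum>k<N. (\<Sum>\<alpha>\<in>S. C k \<alpha> * monom_eval n \<alpha> (y(0 := s)))\<^sup>2)"
        unfolding ps using that by (intro member_le_sum) auto
      also have "\<dots> = (s ^ e)\<^sup>2 * q (y(0 := s))" using rep[of "y(0 := s)"] by (simp add: power_mult power2_eq_square mult_ac)
      also have "\<dots> \<le> (s ^ e)\<^sup>2 * B" using qb by (intro mult_left_mono) auto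
      finally have "\<bar>\<Sum>j\<le>D. G k j y * s ^ j\<bar> \<le> sqrt ((s ^ e)\<^sup>2 * B)" by (intro real_le_rsqrt) simp
      also have "\<dots> = sqrt B * \<bar>s\<bar> ^ e" by (simp add: real_sqrt_mult power_abs)
      finally show "\<bar>\<Sum>j\<le>D. G k j y * s ^ j\<bar> \<le> sqrt B * \<bar>s\<bar> ^ e" .
    qed (use \<delta>(1) that eD in auto)
  qed
  define S' where "S' = {\<alpha>\<in>S. e \<le> \<alpha> 0}"
  define sh where "sh \<alpha> = \<alpha>(0 := \<alpha> 0 - e)" for \<alpha> :: "nat \<Rightarrow> nat"
  define f where "f k z = (\<Sum>\<alpha>\<in>S'. C k \<alpha> * monom_eval n (sh \<alpha>) z)" for k z
  have fpoly: "is_poly n (f k)" for k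
  proof -
    have "sh ` S' \<subseteq> exps n" using S n0 by (auto simp: S'_def sh_def mons_eq_def exps_def)
    then show ?thesis unfolding f_def[abs_def] using finS by (intro poly_of_sum2) (auto simp: S'_def)
  qed
  have feq: "(\<Sum>\<alpha>\<in>S. C k \<alpha> * monom_eval n \<alpha> z) = z 0 ^ e * f k z" if "k < N" for k z
  proof -
    have Su: "S = {\<alpha>\<in>S. \<alpha> 0 < e} \<union> S'" by (auto simp: S'_def)
    have "(\<Sum>\<alpha>\<in>S. C k \<alpha> * monom_eval n \<alpha> z) = (\<Sum>\<alpha>\<in>{\<alpha>\<in>S. \<alpha> 0 < e}. C k \<alpha> * monom_eval n \<alpha> z) + (\<Sum>\<alpha>\<in>S'. C k \<alpha> * monom_eval n \<alpha> z)"
      by (subst Su, rule sum.union_disjoint) (use finS in \<open>auto simp: S'_def\<close>)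
    also have "(\<Sum>\<alpha>\<in>{\<alpha>\<in>S. \<alpha> 0 < e}. C k \<alpha> * monom_eval n \<alpha> z) = 0"
    proof -
      have "(\<Sum>\<alpha>\<in>{\<alpha>\<in>S. \<alpha> 0 < e}. C k \<alpha> * monom_eval n \<alpha> z) = (\<Sum>\<alpha>\<in>{\<alpha>\<in>S. \<alpha> 0 < e}. (C k \<alpha> * R \<alpha> z) * z 0 ^ (\<alpha> 0))"
        by (simp add: mon0 mult_ac)
      also have "\<dots> = (\<Sum>j<e. (\<Sum>\<alpha>\<in>{\<alpha>\<in>{\<alpha>\<in>S. \<alpha> 0 < e}. \<alpha> 0 = j}. C k \<alpha> * R \<alpha> z) * z 0 ^ j)"
        by (rule regroup) (use finS in auto)
      also have "\<dots> = (\<Sum>j<e. G k j z * z 0 ^ j)"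
      proof (intro sum.cong refl)
        fix j assume "j \<in> {..<e}"
        then have "{\<alpha>\<in>{\<alpha>\<in>S. \<alpha> 0 < e}. \<alpha> 0 = j} = {\<alpha>\<in>S. \<alpha> 0 = j}" by auto
        then show "(\<Sum>\<alpha>\<in>{\<alpha>\<in>{\<alpha>\<in>S. \<alpha> 0 < e}. \<alpha> 0 = j}. C k \<alpha> * R \<alpha> z) * z 0 ^ j = G k j z * z 0 ^ j"
          by (simp add: G_def)
      qed
      also have "\<dots> = 0" using low that by simp
      finally show ?thesis .
    qed
    also have "(\<Sum>\<alpha>\<in>S'. C k \<alpha> * monom_eval n \<alpha> z) = (\<Sum>\<alpha>\<in>S'. z 0 ^ e * (C k \<alpha> * monom_eval n (sh \<alpha>) z))"
    proof (intro sum.cong refl)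
      fix \<alpha> assume "\<alpha> \<in> S'"
      then have "e \<le> \<alpha> 0" by (simp add: S'_def)
      then have "z 0 ^ \<alpha> 0 = z 0 ^ e * z 0 ^ (\<alpha> 0 - e)" by (simp add: power_add[symmetric])
      moreover have "monom_eval n (sh \<alpha>) z = z 0 ^ (\<alpha> 0 - e) * R \<alpha> z"
        by (simp add: mon0 sh_def Rupd2)
      ultimately show "C k \<alpha> * monom_eval n \<alpha> z = z 0 ^ e * (C k \<alpha> * monom_eval n (sh \<alpha>) z)"
        by (simp add: mon0 mult_ac)
    qed
    finally show ?thesis by (simp add: f_def sum_distrib_left)
  qed
  have qeq: "q z = (\<Sum>k<N. (f k z)\<^sup>2)" if "z 0 \<noteq> 0" for z
  proof -
    have "(z 0 ^ e)\<^sup>2 * q z = (\<Sum>k<N. (z 0 ^ e * f k z)\<^sup>2)"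
      using rep[of z] feq by (simp add: power_mult power2_eq_square mult_ac)
    also have "\<dots> = (z 0 ^ e)\<^sup>2 * (\<Sum>k<N. (f k z)\<^sup>2)" by (simp add: sum_distrib_left power_mult_distrib)
    finally show ?thesis using that by simp
  qed
  have qall: "q y = (\<Sum>k<N. (f k y)\<^sup>2)" for y
  proof (cases "y 0 = 0")
    case False then show ?thesis by (rule qeq)
  next
    case True
    define u where "u = y(0 := 0)"
    define v where "v = (\<lambda>i::nat. if i = 0 then 1 else (0::real))"
    have uv: "(\<lambda>i. u i + s * v i) = y(0 := s)" for s by (auto simp: u_def v_def)
    have y0: "y(0 := 0) = y" using True by auto
    have "isCont (\<lambda>s. q (\<lambda>i. u i + s * v i)) 0" by (rule form_cont_line[OF qf])
    then have c1: "(\<lambda>s. q (y(0 := s))) \<midarrow>0\<rightarrow> q y" unfolding uv isCont_def y0 by (simp add: y0)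
    have "isCont (\<lambda>s. \<Sum>k<N. (f k (\<lambda>i. u i + s * v i))\<^sup>2) 0"
      unfolding f_def by (intro continuous_intros cont_line2)
    then have c2: "(\<lambda>s. \<Sum>k<N. (f k (y(0 := s)))\<^sup>2) \<midarrow>0\<rightarrow> (\<Sum>k<N. (f k y)\<^sup>2)"
      unfolding uv isCont_def by (simp add: y0)
    have "eventually (\<lambda>s. (\<Sum>k<N. (f k (y(0 := s)))\<^sup>2) = q (y(0 := s))) (at (0::real))"
      unfolding eventually_at by (intro exI[of _ 1]) (auto intro!: qeq[symmetric])
    with c2 have "(\<lambda>s. q (y(0 := s))) \<midarrow>0\<rightarrow> (\<Sum>k<N. (f k y)\<^sup>2)" using tendsto_cong by force
    with c1 show ?thesis by (rule LIM_unique)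
  qed
  show ?thesis unfolding is_sos_def
  proof (intro exI[of _ "map f [0..<N]"] conjI ballI allI)
    show "h \<in> set (map f [0..<N]) \<Longrightarrow> is_poly n h" for h using fpoly by auto
    fix x
    have "(\<Sum>h\<leftarrow>map f [0..<N]. (h x)\<^sup>2) = (\<Sum>k\<leftarrow>[0..<N]. (f k x)\<^sup>2)" by (simp add: o_def)
    also have "\<dots> = (\<Sum>k<N. (f k x)\<^sup>2)" by (simp add: sum_set_upt_conv_sum_list_nat[symmetric] atLeast0LessThan)
    finally show "q x = (\<Sum>h\<leftarrow>map f [0..<N]. (h x)\<^sup>2)" using qall by simp
  qed
qed

theorem theorem1:
  fixes n m :: nat
  assumes "n \<ge> 1" and "even m" and "m > 0"
    and "Delta_set n m \<noteq> {}"
  shows "\<not> (\<exists>d h. is_form n d h \<and> h \<noteq> (\<lambda>x. 0) \<and>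
              (\<forall>p\<in>P_set n m. is_sos n (\<lambda>x. h x * p x)))"
proof
  assume "\<exists>d h. is_form n d h \<and> h \<noteq> (\<lambda>x. 0) \<and> (\<forall>p\<in>P_set n m. is_sos n (\<lambda>x. h x * p x))"
  then obtain d h where hf: "is_form n d h" and hnz: "h \<noteq> (\<lambda>x. 0)"
    and hall: "\<forall>p\<in>P_set n m. is_sos n (\<lambda>x. h x * p x)" by blast
  obtain q where "q \<in> Delta_set n m" using assms(4) by blast
  then have qf: "is_form n m q" and qpsd: "\<And>x. 0 \<le> q x" and qns: "\<not> is_sos n q"
    by (auto simp: Delta_set_def P_set_def Sigma_set_def psd_def)
  have n0: "0 < n" using assms(1) by simp
  have "\<exists>y. q y \<noteq> 0"
  proof (rule ccontr)
    assume "\<not> (\<exists>y. q y \<noteq> 0)"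
    then have "is_sos n q" unfolding is_sos_def by (intro exI[of _ "[]"]) auto
    with qns show False ..
  qed
  then obtain y where qy: "q y > 0" using qpsd by (metis less_eq_real_def)
  obtain b where hb: "h b \<noteq> 0" using hnz by auto
  have "\<exists>a. h a \<noteq> 0 \<and> a 0 \<noteq> 0"
  proof (cases "b 0 = 0")
    case False with hb show ?thesis by blast
  next
    case True
    define v where "v = (\<lambda>i::nat. if i = 0 then 1 else (0::real))"
    have "isCont (\<lambda>s. h (\<lambda>i. b i + s * v i)) 0" by (rule form_cont_line[OF hf])
    then have "(\<lambda>s. h (\<lambda>i. b i + s * v i)) \<midarrow>0\<rightarrow> h b" unfolding isCont_def by simp
    from LIM_D[OF this, of "\<bar>h b\<bar>"] hb obtain \<delta> where \<delta>: "\<delta> > 0"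
      "\<And>s. s \<noteq> 0 \<and> norm (s - 0) < \<delta> \<Longrightarrow> norm (h (\<lambda>i. b i + s * v i) - h b) < \<bar>h b\<bar>" by auto
    define s where "s = \<delta> / 2"
    have "\<bar>h (\<lambda>i. b i + s * v i) - h b\<bar> < \<bar>h b\<bar>" using \<delta> by (intro \<delta>(2)[simplified]) (simp add: s_def)
    then have "h (\<lambda>i. b i + s * v i) \<noteq> 0" by auto
    moreover have "(\<lambda>i. b i + s * v i) 0 \<noteq> 0" using True \<delta> by (simp add: v_def s_def)
    ultimately show ?thesis by blast
  qed
  then obtain a1 where a1: "h a1 \<noteq> 0" "a1 0 \<noteq> 0" by blast
  define a2 where "a2 = (\<lambda>i. if i < n then a1 i else 0)"
  have ha2: "h a2 \<noteq> 0" using form_cong[OF hf, of a2 a1] a1 by (simp add: a2_def)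
  have a20: "a2 0 \<noteq> 0" using a1 n0 by (simp add: a2_def)
  have a2n: "\<And>i. n \<le> i \<Longrightarrow> a2 i = 0" by (simp add: a2_def)
  define p1 where "p1 x = q (\<lambda>i. (y i / a2 0) * x 0)" for x :: "nat \<Rightarrow> real"
  have "is_form n m p1" unfolding p1_def
    by (rule form_comp_linear[OF qf]) (rule form_smult[OF form_var[OF n0]])
  then have "p1 \<in> P_set n m" using qpsd by (simp add: P_set_def psd_def p1_def)
  with hall have sos1: "is_sos n (\<lambda>x. h x * p1 x)" by blast
  have pa: "p1 a2 = q y" using a20 by (simp add: p1_def)
  have pma: "p1 (\<lambda>i. (-1) * a2 i) = q y"
  proof -
    have "p1 (\<lambda>i. (-1) * a2 i) = q (\<lambda>i. (-1) * y i)" using a20 by (simp add: p1_def)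
    also have "\<dots> = (-1) ^ m * q y" by (rule form_homog[OF qf])
    also have "\<dots> = q y" using assms(2) by simp
    finally show ?thesis .
  qed
  have hma: "h (\<lambda>i. (-1) * a2 i) = (-1) ^ d * h a2" by (rule form_homog[OF hf])
  have nn1: "0 \<le> h a2 * q y" using sos_nonneg[OF sos1, of a2] pa by simp
  have nn2: "0 \<le> (-1) ^ d * h a2 * q y" using sos_nonneg[OF sos1, of "\<lambda>i. (-1) * a2 i"] pma hma by simp
  have hq: "h a2 * q y \<noteq> 0" using ha2 qy by simp
  have deven: "even d"
  proof (rule ccontr)
    assume "odd d"
    then have "(-1::real) ^ d = -1" by simp
    with nn1 nn2 hq show False by simp
  qed
  have ha2pos: "h a2 > 0"
  proof (rule ccontr)
    assume "\<not> h a2 > 0"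
    then have "h a2 < 0" using ha2 by simp
    then have "h a2 * q y < 0" using qy by (simp add: mult_neg_pos)
    with nn1 show False by simp
  qed
  obtain a where ha: "h a > 0" and a0: "a 0 > 0"
  proof (cases "a2 0 > 0")
    case True then show ?thesis using that ha2pos by blast
  next
    case False
    then have "(\<lambda>i. (-1) * a2 i) 0 > 0" using a20 by simp
    moreover have "h (\<lambda>i. (-1) * a2 i) > 0" using hma deven ha2pos by simp
    ultimately show ?thesis using that by blast
  qed
  obtain e where e: "d = 2 * e" using deven by blast
  obtain m2 where m2: "m = 2 * m2" using assms(2) by blast
  define D where "D = e + m2"
  have dm: "d + m = 2 * D" by (simp add: D_def e m2)
  obtain C0 where C0: "\<forall>y. h a * y 0 ^ d * q y = (\<Sum>k<card (mons_eq n D). (\<Sum>\<alpha>\<in>mons_eq n D. C0 k \<alpha> * monom_eval n \<alpha> y)\<^sup>2)"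
    using limit_step[where q=q and a=a, OF assms(1) hf qf qpsd hall dm a0] by blast
  define C where "C k \<alpha> = C0 k \<alpha> / sqrt (h a)" for k \<alpha>
  have rep: "y 0 ^ (2 * e) * q y = (\<Sum>k<card (mons_eq n D). (\<Sum>\<alpha>\<in>mons_eq n D. C k \<alpha> * monom_eval n \<alpha> y)\<^sup>2)" for y
  proof -
    have "(\<Sum>k<card (mons_eq n D). (\<Sum>\<alpha>\<in>mons_eq n D. C k \<alpha> * monom_eval n \<alpha> y)\<^sup>2)
        = (\<Sum>k<card (mons_eq n D). (\<Sum>\<alpha>\<in>mons_eq n D. C0 k \<alpha> * monom_eval n \<alpha> y)\<^sup>2) / h a"
      using ha by (simp add: C_def sum_divide_distrib[symmetric] power_divide)
    also have "\<dots> = h a * y 0 ^ (2 * e) * q y / h a" using C0 e by simp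
    also have "\<dots> = y 0 ^ (2 * e) * q y" using ha by simp
    finally show ?thesis by simp
  qed
  have "is_sos n q" by (rule division_step[OF assms(1) qf rep refl]) (simp add: D_def)
  with qns show False ..
qed


end
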